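(* Let $r\ge 1$ be an integer. For every nonnegative integer $n$, the number of overpartitions of $n$ in which every non-overlined part is greater than $r$ and has the same parity as $r+1$ (overlined parts being unrestricted apart from being distinct) equals the number of partitions of $n$ whose mex sequence has length at least $r$.
   Context: A partition of $n$ is a finite non-increasing sequence of positive integers (parts) summing to $n$ (the empty partition is the unique partition of $0$). For a partition $\lambda$, $\mathrm{mex}(\lambda)$ is the least positive integer that is not a part of $\lambda$. The mex sequence of $\lambda$ is the longest sequence of consecutive integers $\mathrm{mex}(\lambda), \mathrm{mex}(\lambda)+1, \dots$ none of which is a part of $\lambda$; its length is a positive integer or infinite (e.g. $(4)$ has mex sequence $(1,2,3)$, $(9,4,4,3,1)$ has mex sequence $(2)$, and $(4,3,3,3,2,1,1)$ has infinite mex sequence $(5,6,7,\dots)$); an infinite length counts as at least $r$. An overpartition of $n$ is a partition of $n$ in which the first occurrence of each part size may be overlined; equivalently, a pair $(\lambda,\mu)$ with $\lambda$ a partition into distinct parts (the overlined parts), $\mu$ an arbitrary partition (the non-overlined parts), and $|\lambda|+|\mu|=n$. *)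

theory Defs
  imports Main "HOL-Library.Multiset"
begin

definition partitions :: "nat \<Rightarrow> nat multiset set" where
  "partitions n = {p. (\<forall>x \<in># p. 0 < x) \<and> sum_mset p = n}"

definition mex :: "nat multiset \<Rightarrow> nat" where
  "mex p = (LEAST m. 0 < m \<and> m \<notin># p)"

text \<open>The mex sequence mex, mex+1, ... (maximal run of non-parts) has length at least r.\<close>
definition mex_seq_length_ge :: "nat \<Rightarrow> nat multiset \<Rightarrow> bool" where
  "mex_seq_length_ge r p = (\<forall>j < r. mex p + j \<notin># p)"

text \<open>Overpartitions of n as pairs (overlined parts: a finite set of distinct positive
  integers, non-overlined parts: a partition), total size n.\<close>
definition overpartitions :: "nat \<Rightarrow> (nat set \<times> nat multiset) set" where
  "overpartitions n = {(l, m). finite l \<and> (\<forall>x \<in> l. 0 < x) \<and> (\<forall>x \<in># m. 0 < x)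
                              \<and> \<Sum>l + sum_mset m = n}"

end

theory Submission
  imports Defs
begin

lemma mem_le_sum: "x \<in># (p::nat multiset) \<Longrightarrow> x \<le> sum_mset p"
  by (metis le_add1 multi_member_split sum_mset.add_mset)

lemma size_le_sum: "\<forall>x\<in>#p. 0 < (x::nat) \<Longrightarrow> size p \<le> sum_mset p"
  by (induction p) auto

lemma finite_partitions: "finite (partitions n)"
proof -
  have "partitions n \<subseteq> (\<Union>s\<in>{..n}. multisets_of_size {1..n} s)"
  proof
    fix p assume "p \<in> partitions n"
    then have a: "\<forall>x\<in>#p. 0 < x" "sum_mset p = n" by (auto simp: partitions_def)
    then have "size p \<le> n" using size_le_sum by metis
    moreover have "set_mset p \<subseteq> {1..n}" using a mem_le_sum by fastforce
    ultimately show "p \<in> (\<Union>s\<in>{..n}. multisets_of_size {1..n} s)"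
      by (auto simp: multisets_of_size_def)
  qed
  then show ?thesis by (rule finite_subset) auto
qed

lemma finite_overpartitions: "finite (overpartitions n)"
proof -
  have "overpartitions n \<subseteq> Pow {1..n} \<times> (\<Union>k\<in>{..n}. partitions k)"
  proof
    fix x assume "x \<in> overpartitions n"
    then obtain l m where x: "x = (l, m)" "finite l" "\<forall>x\<in>l. 0 < x" "\<forall>x\<in>#m. 0 < x" "\<Sum>l + sum_mset m = n"
      by (auto simp: overpartitions_def)
    have "\<forall>y\<in>l. y \<le> \<Sum>l" using x(2) by (auto intro!: member_le_sum)
    then have "l \<subseteq> {1..n}" using x by fastforce
    moreover have "m \<in> partitions (sum_mset m)" using x by (simp add: partitions_def)
    ultimately show "x \<in> Pow {1..n} \<times> (\<Union>k\<in>{..n}. partitions k)" using x by auto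
  qed
  then show ?thesis by (rule finite_subset) (auto intro: finite_partitions)
qed


lemma mex_ex: "\<exists>m. 0 < m \<and> m \<notin># (p::nat multiset)"
proof -
  let ?m = "Suc (Max (insert 0 (set_mset p)))"
  have "?m \<notin># p"
    by (metis Max_ge finite_insert finite_set_mset insertCI not_less_eq_eq order_refl)
  then show ?thesis by blast
qed

lemma mex_pos: "0 < mex p" and mex_notin: "mex p \<notin># p"
  using LeastI_ex[OF mex_ex[of p]] by (auto simp: mex_def)

lemma mex_below: "0 < j \<Longrightarrow> j < mex p \<Longrightarrow> j \<in># p"
  unfolding mex_def using not_less_Least by blast

lemma mex_eqI:
  assumes "0 < m" "m \<notin># p" "\<And>j. 0 < j \<Longrightarrow> j < m \<Longrightarrow> j \<in># p"
  shows "mex p = m"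
  unfolding mex_def
proof (rule Least_equality)
  show "0 < m \<and> m \<notin># p" using assms by simp
  fix y assume "0 < y \<and> y \<notin># p"
  then show "m \<le> y" using assms(3) by (meson not_le)
qed

definition PB :: "nat \<Rightarrow> nat \<Rightarrow> nat multiset set" where
  "PB r n = {p \<in> partitions n. mex_seq_length_ge r p}"

definition EB :: "nat \<Rightarrow> nat \<Rightarrow> nat multiset set" where
  "EB r n = {p \<in> PB r n. \<not> mex_seq_length_ge (r + 2) p}"

definition hB :: "nat \<Rightarrow> nat multiset \<Rightarrow> nat multiset" where
  "hB r p = p - {#mex p - 1#} + {#mex p + r#}"

definition fB :: "nat \<Rightarrow> nat multiset \<Rightarrow> nat multiset" where
  "fB r p = (if mex p + r \<in># p
     then p - {#mex p + r#} + (if mex p = 1 then {#} else {#mex p - 1#})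
     else p - {#mex p + r + 1#} + {#mex p#})"

lemma sum_mset_minus_single: "(a::nat) \<in># p \<Longrightarrow> sum_mset (p - {#a#}) = sum_mset p - a"
  by (metis add_diff_cancel_left' insert_DiffM sum_mset.add_mset)

lemma hB_props:
  assumes r: "r \<ge> 1" and mu: "p \<in> PB r n"
  shows "hB r p \<in> EB r (n + Suc r)" "fB r (hB r p) = p"
proof -
  define m where "m = mex p"
  have pos: "\<forall>x\<in>#p. 0 < x" and sum: "sum_mset p = n" and gap: "\<And>j. j < r \<Longrightarrow> m + j \<notin># p"
    using mu by (auto simp: PB_def partitions_def mex_seq_length_ge_def m_def)
  have m0: "0 < m" "m \<notin># p" "\<And>j. 0 < j \<Longrightarrow> j < m \<Longrightarrow> j \<in># p"
    unfolding m_def using mex_pos mex_notin mex_below by auto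
  have hdef: "hB r p = p - {#m - 1#} + {#m + r#}" by (simp add: hB_def m_def)
  have sumh: "sum_mset (hB r p) = n + Suc r"
  proof (cases "m = 1")
    case True
    then have "0 \<notin># p" using pos by auto
    then show ?thesis using True sum by (simp add: hdef diff_single_trivial)
  next
    case False
    then have "m - 1 \<in># p" using m0 by auto
    then show ?thesis using False m0 sum mem_le_sum[of "m-1" p]
      by (simp add: hdef sum_mset_minus_single)
  qed
  have posh: "\<forall>x\<in>#hB r p. 0 < x" using pos m0(1) by (auto simp: hdef dest: in_diffD)
  have both: "hB r p \<in> EB r (n + Suc r) \<and> fB r (hB r p) = p"
  proof (cases "m = 1 \<or> count p (m - 1) \<ge> 2")
    case True
    have mh: "mex (hB r p) = m"
    proof (rule mex_eqI)
      show "0 < m" by fact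
      show "m \<notin># hB r p" using m0 r by (auto simp: hdef dest: in_diffD)
      fix j assume j: "0 < j" "j < m"
      show "j \<in># hB r p"
      proof (cases "j = m - 1")
        case True
        then show ?thesis using \<open>m = 1 \<or> count p (m - 1) \<ge> 2\<close> j
          by (auto simp: hdef in_diff_count)
      next
        case False
        then show ?thesis using m0(3)[OF j] by (auto simp: hdef in_diff_count)
      qed
    qed
    have g1: "mex_seq_length_ge r (hB r p)"
      unfolding mex_seq_length_ge_def mh
      using gap r by (auto simp: hdef in_diff_count not_in_iff)
    have g2: "\<not> mex_seq_length_ge (r + 2) (hB r p)"
      unfolding mex_seq_length_ge_def mh by (auto simp: hdef intro!: exI[of _ r])
    have inE: "hB r p \<in> EB r (n + Suc r)"
      unfolding EB_def PB_def partitions_def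
      using sumh posh g1 g2 by auto
    have "fB r (hB r p) = p"
    proof (cases "m = 1")
      case True
      then have "0 \<notin># p" using pos by auto
      have e: "m + r \<in># hB r p" by (simp add: hdef)
      then have "fB r (hB r p) = hB r p - {#m + r#} + (if m = 1 then {#} else {#m - 1#})"
        unfolding fB_def mh by simp
      also have "\<dots> = p" using True \<open>0 \<notin># p\<close> by (simp add: hdef diff_single_trivial)
      finally show ?thesis .
    next
      case False
      then have "m - 1 \<in># p" using m0 by auto
      have e: "m + r \<in># hB r p" by (simp add: hdef)
      then have "fB r (hB r p) = hB r p - {#m + r#} + (if m = 1 then {#} else {#m - 1#})"
        unfolding fB_def mh by simp
      also have "\<dots> = p - {#m - 1#} + {#m - 1#}" using False by (simp add: hdef)
      also have "\<dots> = p" using \<open>m - 1 \<in># p\<close> by simp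
      finally show ?thesis .
    qed
    then show ?thesis using inE by simp
  next
    case False
    have m2: "m \<ge> 2" using False m0(1) by linarith
    have "m - 1 \<in># p" using m0(3)[of "m - 1"] m2 by simp
    then have "count p (m - 1) \<ge> 1" by (simp add: Suc_le_eq)
    then have c1: "count p (m - 1) = 1" using False by linarith
    have mh: "mex (hB r p) = m - 1"
    proof (rule mex_eqI)
      show "0 < m - 1" using m2 by simp
      show "m - 1 \<notin># hB r p" using c1 m2 by (auto simp: hdef in_diff_count not_in_iff)
      fix j assume j: "0 < j" "j < m - 1"
      then show "j \<in># hB r p" using m0(3)[of j] by (auto simp: hdef in_diff_count)
    qed
    have gap2: "\<And>j. j < Suc r \<Longrightarrow> m - 1 + j \<notin># hB r p"
    proof -
      fix j assume j: "j < Suc r"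
      show "m - 1 + j \<notin># hB r p"
      proof (cases j)
        case 0
        then show ?thesis using c1 m2 by (auto simp: hdef in_diff_count not_in_iff)
      next
        case (Suc i)
        then have "m + i \<notin># p" using gap j by simp
        moreover have "m - 1 + j = m + i" using Suc m2 by simp
        ultimately show ?thesis using Suc j by (auto simp: hdef in_diff_count not_in_iff)
      qed
    qed
    have g1: "mex_seq_length_ge r (hB r p)"
      unfolding mex_seq_length_ge_def mh using gap2 by auto
    have g2: "\<not> mex_seq_length_ge (r + 2) (hB r p)"
      unfolding mex_seq_length_ge_def mh using m2
      by (auto simp: hdef intro!: exI[of _ "Suc r"])
    have inE: "hB r p \<in> EB r (n + Suc r)"
      unfolding EB_def PB_def partitions_def
      using sumh posh g1 g2 by auto
    have "fB r (hB r p) = p"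
    proof -
      have "m - 1 + r \<notin># hB r p" using gap2[of "r - 1"] r gap2[of r] by simp
      then have "fB r (hB r p) = hB r p - {#m - 1 + r + 1#} + {#m - 1#}"
        unfolding fB_def mh by simp
      also have "m - 1 + r + 1 = m + r" using m2 by simp
      also have "hB r p - {#m + r#} + {#m - 1#} = p - {#m - 1#} + {#m - 1#}" by (simp add: hdef)
      also have "\<dots> = p" using c1 by (simp add: count_greater_zero_iff[symmetric])
      finally show ?thesis .
    qed
    then show ?thesis using inE by simp
  qed
  then show "hB r p \<in> EB r (n + Suc r)" "fB r (hB r p) = p" by auto
qed


lemma fB_props:
  assumes r: "r \<ge> 1" and la: "p \<in> EB r (n + Suc r)"
  shows "fB r p \<in> PB r n" "hB r (fB r p) = p"
proof -
  define m where "m = mex p"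
  have pos: "\<forall>x\<in>#p. 0 < x" and sum: "sum_mset p = n + Suc r"
    and gap: "\<And>j. j < r \<Longrightarrow> m + j \<notin># p"
    and ng: "\<exists>j < r + 2. m + j \<in># p"
    using la by (auto simp: EB_def PB_def partitions_def mex_seq_length_ge_def m_def)
  have m0: "0 < m" "m \<notin># p" "\<And>j. 0 < j \<Longrightarrow> j < m \<Longrightarrow> j \<in># p"
    unfolding m_def using mex_pos mex_notin mex_below by auto
  have both: "fB r p \<in> PB r n \<and> hB r (fB r p) = p"
  proof (cases "m + r \<in># p")
    case True
    define F where "F = p - {#m + r#} + (if m = 1 then {#} else {#m - 1#})"
    have fd: "fB r p = F" unfolding fB_def F_def m_def[symmetric] using True by simp
    have sumF: "sum_mset F = n"
      using True sum mem_le_sum[OF True] m0(1) by (simp add: F_def sum_mset_minus_single)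
    have posF: "\<forall>x\<in>#F. 0 < x" using pos m0(1) by (auto simp: F_def dest: in_diffD)
    have mF: "mex F = m"
    proof (rule mex_eqI)
      show "0 < m" by fact
      show "m \<notin># F" using m0 r by (auto simp: F_def dest: in_diffD)
      fix j assume j: "0 < j" "j < m"
      then show "j \<in># F" using m0(3)[OF j] by (auto simp: F_def in_diff_count)
    qed
    have gF: "mex_seq_length_ge r F"
      unfolding mex_seq_length_ge_def mF using gap m0(1) by (auto simp: F_def dest: in_diffD)
    have "hB r F = F - {#m - 1#} + {#m + r#}" unfolding hB_def mF by simp
    also have "\<dots> = p"
    proof (cases "m = 1")
      case True
      then have "0 \<notin># p - {#m + r#}" using pos by (auto dest: in_diffD)
      have "F - {#m - 1#} = p - {#m + r#}"
      proof -
        have F1: "F = p - {#m + r#}" using True by (simp add: F_def)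
        have "m - 1 = 0" using True by simp
        then show ?thesis unfolding F1 using diff_single_trivial[OF \<open>0 \<notin># p - {#m + r#}\<close>] by metis
      qed
      then show ?thesis using \<open>m + r \<in># p\<close> by simp
    next
      case False
      then show ?thesis using \<open>m + r \<in># p\<close> by (simp add: F_def)
    qed
    finally show ?thesis using fd sumF posF gF by (simp add: PB_def partitions_def)
  next
    case False
    have inp: "m + r + 1 \<in># p"
    proof -
      obtain j where j: "j < r + 2" "m + j \<in># p" using ng by blast
      have "\<not> j < r" using gap j(2) by blast
      moreover have "j \<noteq> r" using False j(2) by blast
      ultimately have "j = r + 1" using j(1) by linarith
      then show ?thesis using j(2) by simp
    qed
    define F where "F = p - {#m + r + 1#} + {#m#}"
    have fd: "fB r p = F" unfolding fB_def F_def m_def[symmetric] using False by simp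
    have sumF: "sum_mset F = n"
      using inp sum mem_le_sum[OF inp] by (simp add: F_def sum_mset_minus_single)
    have posF: "\<forall>x\<in>#F. 0 < x" using pos m0(1) by (auto simp: F_def dest: in_diffD)
    have nm1: "m + 1 \<notin># p"
    proof (cases "r = 1")
      case True then show ?thesis using False by simp
    next
      case False then show ?thesis using gap[of 1] r by simp
    qed
    have mF: "mex F = m + 1"
    proof (rule mex_eqI)
      show "0 < m + 1" by simp
      show "m + 1 \<notin># F" using nm1 by (auto simp: F_def dest: in_diffD)
      fix j assume j: "0 < j" "j < m + 1"
      then show "j \<in># F" using m0(3)[of j] by (cases "j = m") (auto simp: F_def in_diff_count)
    qed
    have gF: "mex_seq_length_ge r F"
      unfolding mex_seq_length_ge_def mF
    proof (intro allI impI)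
      fix j assume j: "j < r"
      have "m + 1 + j \<notin># p"
      proof (cases "Suc j < r")
        case True then show ?thesis using gap[OF True] by simp
      next
        case False then have "Suc j = r" using j by simp
        then have "m + 1 + j = m + r" by simp
        then show ?thesis using \<open>m + r \<notin># p\<close> by (simp only: not_False_eq_True)
      qed
      then show "m + 1 + j \<notin># F" by (auto simp: F_def dest: in_diffD)
    qed
    have "hB r F = F - {#m#} + {#m + 1 + r#}" unfolding hB_def mF by simp
    also have "\<dots> = p" using inp by (simp add: F_def)
    finally show ?thesis using fd sumF posF gF by (simp add: PB_def partitions_def)
  qed
  then show "fB r p \<in> PB r n" "hB r (fB r p) = p" by auto
qed

lemma PB_rec:
  assumes r: "r \<ge> 1"
  shows "card (PB r (n + Suc r)) = card (PB (r + 2) (n + Suc r)) + card (PB r n)"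
proof -
  let ?N = "n + Suc r"
  have fin: "finite (PB s N)" for s N by (rule finite_subset[OF _ finite_partitions[of N]]) (auto simp: PB_def)
  have split: "PB r ?N = PB (r + 2) ?N \<union> EB r ?N"
    by (auto simp: PB_def EB_def mex_seq_length_ge_def)
  have disj: "PB (r + 2) ?N \<inter> EB r ?N = {}" by (auto simp: PB_def EB_def)
  have bij: "bij_betw (hB r) (PB r n) (EB r ?N)"
    by (rule bij_betw_byWitness[where f' = "fB r"]) (use hB_props[OF r] fB_props[OF r] in auto)
  have "card (PB r ?N) = card (PB (r + 2) ?N) + card (EB r ?N)"
    unfolding split
    by (rule card_Un_disjoint) (use fin disj in \<open>auto simp: EB_def intro: finite_subset[OF _ fin]\<close>)
  also have "card (EB r ?N) = card (PB r n)" using bij_betw_same_card[OF bij] by simp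
  finally show ?thesis .
qed


definition OA :: "nat \<Rightarrow> nat \<Rightarrow> (nat set \<times> nat multiset) set" where
  "OA r n = {(l, m) \<in> overpartitions n. \<forall>x \<in># m. r < x \<and> even x = even (r + 1)}"

lemma OA_rec:
  shows "card (OA r (n + Suc r)) = card (OA (r + 2) (n + Suc r)) + card (OA r n)"
proof -
  let ?N = "n + Suc r"
  define EA where "EA = {x \<in> OA r ?N. Suc r \<in># snd x}"
  have fin: "finite (OA s N)" for s N
    by (rule finite_subset[OF _ finite_overpartitions[of N]]) (auto simp: OA_def)
  have split: "OA r ?N = OA (r + 2) ?N \<union> EA"
  proof
    show "OA r ?N \<subseteq> OA (r + 2) ?N \<union> EA"
    proof
      fix x assume x: "x \<in> OA r ?N"
      show "x \<in> OA (r + 2) ?N \<union> EA"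
      proof (cases "Suc r \<in># snd x")
        case True then show ?thesis using x by (auto simp: EA_def)
      next
        case False
        obtain l m where lm: "x = (l, m)" by force
        have "\<forall>y \<in># m. r + 2 < y \<and> even y = even (r + 2 + 1)"
        proof
          fix y assume y: "y \<in># m"
          then have "r < y" "even y = even (r + 1)" using x lm by (auto simp: OA_def)
          moreover have "y \<noteq> Suc r" using False y lm by auto
          moreover have "y \<noteq> r + 2" using calculation by auto
          ultimately show "r + 2 < y \<and> even y = even (r + 2 + 1)" by auto
        qed
        then show ?thesis using x lm by (auto simp: OA_def)
      qed
    qed
    show "OA (r + 2) ?N \<union> EA \<subseteq> OA r ?N"
      by (auto simp: OA_def EA_def)
  qed
  have disj: "OA (r + 2) ?N \<inter> EA = {}" by (fastforce simp: OA_def EA_def)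
  have bij: "bij_betw (\<lambda>(l, m). (l, add_mset (Suc r) m)) (OA r n) EA"
  proof (rule bij_betw_byWitness[where f' = "\<lambda>(l, m). (l, m - {#Suc r#})"])
    show "\<forall>a\<in>OA r n. (\<lambda>(l, m). (l, m - {#Suc r#})) ((\<lambda>(l, m). (l, add_mset (Suc r) m)) a) = a"
      by auto
    show "\<forall>a\<in>EA. (\<lambda>(l, m). (l, add_mset (Suc r) m)) ((\<lambda>(l, m). (l, m - {#Suc r#})) a) = a"
      by (auto simp: EA_def)
    show "(\<lambda>(l, m). (l, add_mset (Suc r) m)) ` OA r n \<subseteq> EA"
      by (auto simp: EA_def OA_def overpartitions_def)
    show "(\<lambda>(l, m). (l, m - {#Suc r#})) ` EA \<subseteq> OA r n"
    proof
      fix y assume "y \<in> (\<lambda>(l, m). (l, m - {#Suc r#})) ` EA"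
      then obtain l m where lm: "(l, m) \<in> EA" "y = (l, m - {#Suc r#})" by auto
      then have a: "finite l" "\<forall>x\<in>l. 0 < x" "\<forall>x\<in>#m. 0 < x" "\<Sum>l + sum_mset m = ?N"
        "\<forall>x \<in># m. r < x \<and> even x = even (r + 1)" "Suc r \<in># m"
        by (auto simp: EA_def OA_def overpartitions_def)
      have "sum_mset (m - {#Suc r#}) = sum_mset m - Suc r" using a(6) by (rule sum_mset_minus_single)
      moreover have "Suc r \<le> sum_mset m" using a(6) by (rule mem_le_sum)
      ultimately show "y \<in> OA r n" using a lm(2) by (auto simp: OA_def overpartitions_def dest: in_diffD)
    qed
  qed
  have "card (OA r ?N) = card (OA (r + 2) ?N) + card EA"
    unfolding split
    by (rule card_Un_disjoint) (use fin disj in \<open>auto simp: EA_def intro: finite_subset[OF _ fin]\<close>)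
  also have "card EA = card (OA r n)" using bij_betw_same_card[OF bij] by simp
  finally show ?thesis .
qed



definition QS :: "nat \<Rightarrow> nat set set" where
  "QS n = {l. finite l \<and> (\<forall>x\<in>l. 0 < x) \<and> \<Sum>l = n}"

definition Q :: "nat \<Rightarrow> nat \<Rightarrow> nat set set" where
  "Q k n = {l \<in> QS n. card l = k}"

definition C :: "nat \<Rightarrow> nat \<Rightarrow> nat multiset set" where
  "C k n = {p \<in> partitions n. set_mset p = {1..k}}"

lemma card_le_sum_set: "finite l \<Longrightarrow> \<forall>x\<in>l. 0 < (x::nat) \<Longrightarrow> card l \<le> \<Sum>l"
proof -
  assume "finite l" "\<forall>x\<in>l. 0 < (x::nat)"
  then have "(\<Sum>x\<in>l. (1::nat)) \<le> (\<Sum>x\<in>l. x)" by (intro sum_mono) auto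
  then show ?thesis by simp
qed

lemma finite_QS: "finite (QS n)"
proof (rule finite_subset[of _ "Pow {1..n}"])
  show "QS n \<subseteq> Pow {1..n}"
  proof
    fix l assume l: "l \<in> QS n"
    then have "\<forall>y\<in>l. y \<le> \<Sum>l" by (auto simp: QS_def intro!: member_le_sum)
    then show "l \<in> Pow {1..n}" using l by (fastforce simp: QS_def)
  qed
qed simp

lemma finite_Q: "finite (Q k n)" using finite_QS by (auto simp: Q_def)
lemma finite_C: "finite (C k n)" using finite_partitions by (auto simp: C_def)

lemma Q0: "Q 0 n = (if n = 0 then {{}} else {})"
  by (auto simp: Q_def QS_def)

lemma C0: "C 0 n = (if n = 0 then {{#}} else {})"
  by (auto simp: C_def partitions_def)

lemma Q_empty: "n < k \<Longrightarrow> Q k n = {}"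
  using card_le_sum_set by (fastforce simp: Q_def QS_def)

lemma C_empty: "n < Suc k \<Longrightarrow> C (Suc k) n = {}"
proof (rule ccontr)
  assume "n < Suc k" "C (Suc k) n \<noteq> {}"
  then obtain p where p: "p \<in> partitions n" "set_mset p = {1..Suc k}" by (auto simp: C_def)
  then have "Suc k \<in># p" by simp
  then have "Suc k \<le> n" using mem_le_sum p(1) by (fastforce simp: partitions_def)
  then show False using \<open>n < Suc k\<close> by simp
qed

lemma C_rec: "card (C (Suc k) (n + Suc k)) = card (C (Suc k) n) + card (C k n)"
proof -
  have eq: "C (Suc k) (n + Suc k) = add_mset (Suc k) ` (C (Suc k) n \<union> C k n)"
  proof
    show "add_mset (Suc k) ` (C (Suc k) n \<union> C k n) \<subseteq> C (Suc k) (n + Suc k)"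
      by (auto simp: C_def partitions_def)
    show "C (Suc k) (n + Suc k) \<subseteq> add_mset (Suc k) ` (C (Suc k) n \<union> C k n)"
    proof
      fix q assume q: "q \<in> C (Suc k) (n + Suc k)"
      then have qs: "set_mset q = {1..Suc k}" "\<forall>x\<in>#q. 0 < x" "sum_mset q = n + Suc k"
        by (auto simp: C_def partitions_def)
      have inq: "Suc k \<in># q" using qs by simp
      define q' where "q' = q - {#Suc k#}"
      have qq: "q = add_mset (Suc k) q'" using inq by (simp add: q'_def)
      have sq': "sum_mset q' = n" using qs(3) qq by simp
      have pq': "\<forall>x\<in>#q'. 0 < x" using qs(2) qq by simp
      have m1: "\<And>x. x \<in># q \<longleftrightarrow> x \<in># q' \<or> x = Suc k" using qq by auto
      have m2: "\<And>x. x \<in># q \<longleftrightarrow> 1 \<le> x \<and> x \<le> Suc k" using qs(1) by (metis atLeastAtMost_iff)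
      have "q' \<in> C (Suc k) n \<union> C k n"
      proof (cases "Suc k \<in># q'")
        case True
        have "set_mset q' = {1..Suc k}"
        proof (rule set_eqI)
          fix x show "x \<in># q' \<longleftrightarrow> x \<in> {1..Suc k}"
            using m1[of x] m2[of x] True by (cases "x = Suc k") auto
        qed
        then show ?thesis using sq' pq' by (simp add: C_def partitions_def)
      next
        case False
        have "set_mset q' = {1..k}"
        proof (rule set_eqI)
          fix x show "x \<in># q' \<longleftrightarrow> x \<in> {1..k}"
            using m1[of x] m2[of x] False by (cases "x = Suc k") auto
        qed
        then show ?thesis using sq' pq' by (simp add: C_def partitions_def)
      qed
      then show "q \<in> add_mset (Suc k) ` (C (Suc k) n \<union> C k n)" using qq by blast
    qed
  qed
  have "card (C (Suc k) (n + Suc k)) = card (C (Suc k) n \<union> C k n)"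
    unfolding eq by (rule card_image) (simp add: inj_on_def)
  also have "\<dots> = card (C (Suc k) n) + card (C k n)"
    by (rule card_Un_disjoint[OF finite_C finite_C]) (auto simp: C_def)
  finally show ?thesis .
qed

lemma sum_Suc_image: "finite l \<Longrightarrow> \<Sum>(Suc ` l) = \<Sum>l + card l"
proof -
  assume f: "finite l"
  have "\<Sum>(Suc ` l) = sum Suc l" by (simp add: sum.reindex)
  also have "\<dots> = \<Sum>l + card l" using f by (induction l rule: finite_induct) auto
  finally show ?thesis .
qed

lemma Q_rec: "card (Q (Suc k) (n + Suc k)) = card (Q (Suc k) n) + card (Q k n)"
proof -
  define g1 where "g1 = (\<lambda>l::nat set. Suc ` l)"
  define g2 where "g2 = (\<lambda>l::nat set. insert 1 (Suc ` l))"
  have eq: "Q (Suc k) (n + Suc k) = g1 ` Q (Suc k) n \<union> g2 ` Q k n"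
  proof
    show "g1 ` Q (Suc k) n \<union> g2 ` Q k n \<subseteq> Q (Suc k) (n + Suc k)"
    proof
      fix l' assume "l' \<in> g1 ` Q (Suc k) n \<union> g2 ` Q k n"
      then show "l' \<in> Q (Suc k) (n + Suc k)"
      proof
        assume "l' \<in> g1 ` Q (Suc k) n"
        then obtain l where l: "l \<in> Q (Suc k) n" "l' = Suc ` l" by (auto simp: g1_def)
        then show ?thesis by (auto simp: Q_def QS_def sum_Suc_image card_image)
      next
        assume "l' \<in> g2 ` Q k n"
        then obtain l where l: "l \<in> Q k n" "l' = insert 1 (Suc ` l)" by (auto simp: g2_def)
        then have "1 \<notin> Suc ` l" by (auto simp: Q_def QS_def)
        then show ?thesis using l by (auto simp: Q_def QS_def sum_Suc_image card_image)
      qed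
    qed
    show "Q (Suc k) (n + Suc k) \<subseteq> g1 ` Q (Suc k) n \<union> g2 ` Q k n"
    proof
      fix l' assume l': "l' \<in> Q (Suc k) (n + Suc k)"
      then have a: "finite l'" "\<forall>x\<in>l'. 0 < x" "\<Sum>l' = n + Suc k" "card l' = Suc k"
        by (auto simp: Q_def QS_def)
      define l0 where "l0 = {x. 0 < x \<and> Suc x \<in> l'}"
      have e: "Suc ` l0 = l' - {1}"
      proof
        show "Suc ` l0 \<subseteq> l' - {1}" by (auto simp: l0_def)
        show "l' - {1} \<subseteq> Suc ` l0"
        proof
          fix y assume y: "y \<in> l' - {1}"
          then have "y = Suc (y - 1)" "0 < y - 1" using a(2) by (auto simp: nat_neq_iff)
          moreover have "y - 1 \<in> l0" using calculation y by (auto simp: l0_def)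
          ultimately show "y \<in> Suc ` l0" using image_eqI[of y Suc "y - 1" l0] by blast
        qed
      qed
      have fl0: "finite l0"
        by (metis a(1) e finite_Diff finite_imageD inj_Suc inj_on_subset subset_UNIV)
      have pl0: "\<forall>x\<in>l0. 0 < x" by (auto simp: l0_def)
      have cl0: "card l0 = card (l' - {1})" using e card_image[of Suc l0] by simp
      have sl0: "\<Sum>l0 + card l0 = \<Sum>(l' - {1})" using e sum_Suc_image[OF fl0] by simp
      show "l' \<in> g1 ` Q (Suc k) n \<union> g2 ` Q k n"
      proof (cases "1 \<in> l'")
        case False
        then have "l' - {1} = l'" by simp
        then have "l' = g1 l0" "l0 \<in> Q (Suc k) n"
          using e cl0 sl0 a fl0 pl0 by (auto simp: g1_def Q_def QS_def)
        then show ?thesis by blast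
      next
        case True
        have "\<Sum>(l' - {1}) = \<Sum>l' - 1" using True a(1) by (simp add: sum_diff1_nat)
        moreover have "card (l' - {1}) = k" using True a by simp
        ultimately have "l0 \<in> Q k n" using cl0 sl0 a fl0 pl0 by (auto simp: Q_def QS_def)
        moreover have "l' = g2 l0" using e True by (auto simp: g2_def)
        ultimately show ?thesis by blast
      qed
    qed
  qed
  have inj1: "inj_on g1 (Q (Suc k) n)" unfolding g1_def by (simp add: inj_on_def inj_image_eq_iff)
  have inj2: "inj_on g2 (Q k n)"
  proof (rule inj_onI)
    fix a b assume ab: "a \<in> Q k n" "b \<in> Q k n" "g2 a = g2 b"
    have "1 \<notin> Suc ` a" "1 \<notin> Suc ` b" using ab by (auto simp: Q_def QS_def)
    then have "Suc ` a = Suc ` b" using ab(3) unfolding g2_def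
      by (metis insert_ident)
    then show "a = b" by (simp add: inj_image_eq_iff)
  qed
  have disj: "g1 ` Q (Suc k) n \<inter> g2 ` Q k n = {}"
    by (auto simp: g1_def g2_def Q_def QS_def)
  have "card (Q (Suc k) (n + Suc k)) = card (g1 ` Q (Suc k) n) + card (g2 ` Q k n)"
    unfolding eq by (rule card_Un_disjoint) (auto simp: finite_Q disj)
  also have "\<dots> = card (Q (Suc k) n) + card (Q k n)"
    using card_image[OF inj1] card_image[OF inj2] by simp
  finally show ?thesis .
qed

lemma QC: "card (Q k n) = card (C k n)"
proof (induction k arbitrary: n)
  case 0
  then show ?case by (simp add: Q0 C0)
next
  case (Suc k)
  show ?case
  proof (induction n rule: less_induct)
    case (less n)
    show ?case
    proof (cases "n < Suc k")
      case True
      then show ?thesis by (simp add: Q_empty C_empty)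
    next
      case False
      define n' where "n' = n - Suc k"
      have n': "n = n' + Suc k" using False by (simp add: n'_def)
      have "n' < n" using n' by simp
      then show ?thesis using n' Q_rec C_rec less.IH Suc.IH by simp
    qed
  qed
qed


lemma OA_base:
  assumes "N \<le> r"
  shows "card (OA r N) = (\<Sum>k\<le>N. card (Q k N))"
proof -
  have e1: "OA r N = (\<lambda>l. (l, {#})) ` QS N"
  proof
    show "OA r N \<subseteq> (\<lambda>l. (l, {#})) ` QS N"
    proof
      fix x assume x: "x \<in> OA r N"
      then obtain l m where lm: "x = (l, m)" "finite l" "\<forall>y\<in>l. 0 < y" "\<Sum>l + sum_mset m = N"
        "\<forall>y \<in># m. r < y"
        by (auto simp: OA_def overpartitions_def)
      have "m = {#}"
      proof (rule ccontr)
        assume "m \<noteq> {#}"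
        then obtain y where "y \<in># m" by blast
        then have "r < y" "y \<le> sum_mset m" using lm(5) mem_le_sum by auto
        then show False using lm(4) assms by linarith
      qed
      then show "x \<in> (\<lambda>l. (l, {#})) ` QS N" using lm by (auto simp: QS_def)
    qed
    show "(\<lambda>l. (l, {#})) ` QS N \<subseteq> OA r N"
      by (auto simp: QS_def OA_def overpartitions_def)
  qed
  have e2: "QS N = (\<Union>k\<in>{..N}. Q k N)"
  proof
    show "QS N \<subseteq> (\<Union>k\<in>{..N}. Q k N)"
    proof
      fix l assume l: "l \<in> QS N"
      then have "card l \<le> N" using card_le_sum_set by (auto simp: QS_def)
      then show "l \<in> (\<Union>k\<in>{..N}. Q k N)" using l by (auto simp: Q_def)
    qed
    show "(\<Union>k\<in>{..N}. Q k N) \<subseteq> QS N" by (auto simp: Q_def)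
  qed
  have "card (OA r N) = card (QS N)" unfolding e1 by (rule card_image) (simp add: inj_on_def)
  also have "\<dots> = (\<Sum>k\<le>N. card (Q k N))" unfolding e2
    by (rule card_UN_disjoint) (auto simp: finite_Q[unfolded Q_def] Q_def)
  finally show ?thesis .
qed

lemma PB_base:
  assumes "N \<le> r"
  shows "card (PB r N) = (\<Sum>k\<le>N. card (C k N))"
proof -
  have e2: "PB r N = (\<Union>k\<in>{..N}. C k N)"
  proof
    show "PB r N \<subseteq> (\<Union>k\<in>{..N}. C k N)"
    proof
      fix p assume p: "p \<in> PB r N"
      then have a: "\<forall>x\<in>#p. 0 < x" "sum_mset p = N" "\<And>j. j < r \<Longrightarrow> mex p + j \<notin># p"
        by (auto simp: PB_def partitions_def mex_seq_length_ge_def)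
      define k where "k = mex p - 1"
      have sp: "set_mset p = {1..k}"
      proof (rule set_eqI)
        fix x
        show "x \<in># p \<longleftrightarrow> x \<in> {1..k}"
        proof
          assume x: "x \<in># p"
          have "x < mex p"
          proof (rule ccontr)
            assume "\<not> x < mex p"
            moreover have "x \<le> N" using x a(2) mem_le_sum by blast
            ultimately have "x - mex p < r" "mex p + (x - mex p) = x"
              using assms mex_pos[of p] by auto
            then show False using a(3) x by metis
          qed
          then show "x \<in> {1..k}" using a(1) x by (auto simp: k_def)
        next
          assume "x \<in> {1..k}"
          then show "x \<in># p" using mex_below[of x p] by (auto simp: k_def)
        qed
      qed
      have "k \<le> N"
      proof (cases "k = 0")
        case False
        then have "k \<in># p" using sp by simp
        then show ?thesis using a(2) mem_le_sum by blast
      qed simp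
      then show "p \<in> (\<Union>k\<in>{..N}. C k N)" using p sp by (auto simp: C_def PB_def)
    qed
    show "(\<Union>k\<in>{..N}. C k N) \<subseteq> PB r N"
    proof
      fix p assume "p \<in> (\<Union>k\<in>{..N}. C k N)"
      then obtain k where p: "p \<in> partitions N" "set_mset p = {1..k}" by (auto simp: C_def)
      have "mex p = Suc k" by (rule mex_eqI) (use p(2) in auto)
      then show "p \<in> PB r N" using p by (auto simp: PB_def mex_seq_length_ge_def)
    qed
  qed
  show ?thesis unfolding e2
    by (rule card_UN_disjoint) (simp_all add: finite_C, auto simp: C_def)
qed

lemma main: "1 \<le> r \<Longrightarrow> card (OA r N) = card (PB r N)"
proof (induction N arbitrary: r rule: less_induct)
  case (less N)
  note outer = less.IH
  have "\<forall>r. 1 \<le> r \<longrightarrow> N - r = d \<longrightarrow> card (OA r N) = card (PB r N)" for d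
  proof (induction d rule: less_induct)
    case (less d)
    show ?case
    proof (intro allI impI)
      fix r assume r: "1 \<le> r" and d: "N - r = d"
      show "card (OA r N) = card (PB r N)"
      proof (cases "N \<le> r")
        case True
        then show ?thesis using OA_base PB_base QC by simp
      next
        case False
        define n' where "n' = N - Suc r"
        have N: "N = n' + Suc r" using False by (simp add: n'_def)
        have "card (OA (r + 2) N) = card (PB (r + 2) N)"
          using less.IH[of "N - (r + 2)"] d False r by simp
        moreover have "card (OA r n') = card (PB r n')"
          using outer[of n' r] N r by simp
        ultimately show ?thesis using N OA_rec[of r n'] PB_rec[OF r, of n'] by simp
      qed
    qed
  qed
  then show ?case using less.prems by blast
qed

theorem theorem2p3:
  fixes r n :: nat
  assumes "r \<ge> 1"
  shows "card {(l, m) \<in> overpartitions n. \<forall>x \<in># m. r < x \<and> even x = even (r + 1)}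
       = card {p \<in> partitions n. mex_seq_length_ge r p}"
  using main[OF assms, of n] unfolding OA_def PB_def .

end
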